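(* Let $(V,\langle\cdot,\cdot\rangle)$ be a Hilbert space and $Q\subset V$ a set of points with $M_Q:=\sup\{\|\mathbf v\|:\mathbf v\in Q\}<\infty$ and $-Q=Q$. Let $\epsilon>0$, and let $f:V\to\mathbb R^k$ be a linear map satisfying $$(1-\epsilon)\|\mathbf v_1-\mathbf v_2\|^2\le\|f(\mathbf v_1)-f(\mathbf v_2)\|^2\le(1+\epsilon)\|\mathbf v_1-\mathbf v_2\|^2\quad\text{for all }\mathbf v_1,\mathbf v_2\in Q,$$ where the norm on $\mathbb R^k$ is induced by a fixed inner product, and let $f^*:\mathbb R^k\to V$ be the adjoint with respect to these inner products. Then for all $\mathbf w_1,\mathbf w_2\in\mathrm{span}\{Q\}$, $$|\langle\mathbf w_1,(\mathbb I_V-f^*\circ f)(\mathbf w_2)\rangle|\le\epsilon M_Q^2\|\mathbf w_1\|_Q\|\mathbf w_2\|_Q.$$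
   Context: For a subset $Q$ of a normed space, $\|\mathbf v\|_Q=\inf\{\sum_j|\lambda_j|:\sum_j\lambda_j\mathbf v_j=\mathbf v,\ \mathbf v_j\in Q\}$ (infimum over finite linear combinations of elements of $Q$), defined on $\mathrm{span}\{Q\}$. $\mathbb I_V$ is the identity of $V$. *)

theory Defs
  imports "HOL-Analysis.Analysis"
begin

definition Qnorm :: "'a::real_vector set \<Rightarrow> 'a \<Rightarrow> real" where
  "Qnorm Q v = Inf {sum_list (map (\<lambda>p. \<bar>fst p\<bar>) ps) | ps.
      set (map snd ps) \<subseteq> Q \<and> sum_list (map (\<lambda>p. fst p *\<^sub>R snd p) ps) = v}"

end

theory Submission
  imports Defs
begin

lemma bil_bound:
  fixes B :: "'a::real_vector \<Rightarrow> 'a \<Rightarrow> real"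
  assumes addL: "\<And>a u x y. B (a *\<^sub>R u + x) y = a * B u y + B x y"
    and addR: "\<And>a u x y. B x (a *\<^sub>R u + y) = a * B x u + B x y"
    and z1: "\<And>y. B 0 y = 0" and z2: "\<And>x. B x 0 = 0"
    and K: "\<forall>u\<in>Q. \<forall>v\<in>Q. \<bar>B u v\<bar> \<le> K"
  shows "set (map snd ps) \<subseteq> Q \<Longrightarrow> set (map snd qs) \<subseteq> Q \<Longrightarrow>
    \<bar>B (sum_list (map (\<lambda>p. fst p *\<^sub>R snd p) ps)) (sum_list (map (\<lambda>p. fst p *\<^sub>R snd p) qs))\<bar>
    \<le> K * sum_list (map (\<lambda>p. \<bar>fst p\<bar>) ps) * sum_list (map (\<lambda>p. \<bar>fst p\<bar>) qs)"
proof (induction ps)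
  case Nil
  then show ?case by (simp add: z1)
next
  case (Cons p ps)
  obtain a u where p: "p = (a, u)" by (cases p)
  have uQ: "u \<in> Q" using Cons.prems p by auto
  have "\<bar>B u (sum_list (map (\<lambda>p. fst p *\<^sub>R snd p) qs))\<bar> \<le> K * sum_list (map (\<lambda>p. \<bar>fst p\<bar>) qs)"
    using Cons.prems(2)
  proof (induction qs)
    case Nil then show ?case by (simp add: z2)
  next
    case (Cons q qs)
    obtain b v where q: "q = (b, v)" by (cases q)
    have vQ: "v \<in> Q" using Cons.prems q by auto
    have "\<bar>B u v\<bar> \<le> K" using K uQ vQ by blast
    then have "\<bar>b * B u v\<bar> \<le> \<bar>b\<bar> * K"
      by (simp add: abs_mult mult_left_mono)
    moreover have "\<bar>B u (sum_list (map (\<lambda>p. fst p *\<^sub>R snd p) qs))\<bar> \<le> K * sum_list (map (\<lambda>p. \<bar>fst p\<bar>) qs)"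
      using Cons by auto
    ultimately show ?case using q by (simp add: addR algebra_simps)
  qed
  then have "\<bar>a * B u (sum_list (map (\<lambda>p. fst p *\<^sub>R snd p) qs))\<bar> \<le> \<bar>a\<bar> * (K * sum_list (map (\<lambda>p. \<bar>fst p\<bar>) qs))"
    by (simp add: abs_mult mult_left_mono)
  moreover have "\<bar>B (sum_list (map (\<lambda>p. fst p *\<^sub>R snd p) ps)) (sum_list (map (\<lambda>p. fst p *\<^sub>R snd p) qs))\<bar>
    \<le> K * sum_list (map (\<lambda>p. \<bar>fst p\<bar>) ps) * sum_list (map (\<lambda>p. \<bar>fst p\<bar>) qs)"
    using Cons by auto
  ultimately show ?case using p by (simp add: addL algebra_simps)
qed

lemma Qnorm_nonempty:
  assumes "w \<in> span Q"
  shows "\<exists>ps. set (map snd ps) \<subseteq> Q \<and> sum_list (map (\<lambda>p. fst p *\<^sub>R snd p) ps) = w"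
proof -
  obtain t r where t: "finite t" "t \<subseteq> Q" "w = (\<Sum>a\<in>t. r a *\<^sub>R a)"
    using assms unfolding span_explicit by blast
  obtain xs where xs: "set xs = t" "distinct xs" using finite_distinct_list[OF t(1)] by blast
  let ?ps = "map (\<lambda>a. (r a, a)) xs"
  have "sum_list (map (\<lambda>p. fst p *\<^sub>R snd p) ?ps) = sum_list (map (\<lambda>a. r a *\<^sub>R a) xs)"
    by (simp add: o_def)
  also have "\<dots> = w" using xs t by (simp add: sum_list_distinct_conv_sum_set)
  finally show ?thesis using xs t by (intro exI[of _ ?ps]) (auto simp: o_def)
qed

lemma Qnorm_ge:
  assumes "set (map snd ps) \<subseteq> Q" "sum_list (map (\<lambda>p. fst p *\<^sub>R snd p) ps) = w"
  shows "Qnorm Q w \<le> sum_list (map (\<lambda>p. \<bar>fst p\<bar>) ps)"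
  unfolding Qnorm_def
  apply (rule cInf_lower)
  using assms apply blast
  apply (rule bdd_belowI[of _ 0])
  apply (auto intro!: sum_list_nonneg)
  done

lemma Qnorm_greatest:
  assumes "w \<in> span Q"
    and "\<And>ps. set (map snd ps) \<subseteq> Q \<Longrightarrow> sum_list (map (\<lambda>p. fst p *\<^sub>R snd p) ps) = w
      \<Longrightarrow> x \<le> sum_list (map (\<lambda>p. \<bar>fst p\<bar>) ps)"
  shows "x \<le> Qnorm Q w"
  unfolding Qnorm_def
  apply (rule cInf_greatest)
  using Qnorm_nonempty[OF assms(1)] apply blast
  using assms(2) by blast

lemma Qnorm_nonneg:
  assumes "w \<in> span Q" shows "0 \<le> Qnorm Q w"
  by (rule Qnorm_greatest[OF assms]) (auto intro!: sum_list_nonneg)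

theorem mainTheorem6:
  fixes Q :: "'a::{real_inner, complete_space} set"
    and f :: "'a \<Rightarrow> 'b::euclidean_space"
    and fstar :: "'b \<Rightarrow> 'a"
    and \<epsilon> :: real
  assumes bdd: "bdd_above (norm ` Q)"
    and symm: "uminus ` Q = Q"
    and eps: "\<epsilon> > 0"
    and lin: "linear f"
    and JL: "\<forall>v1\<in>Q. \<forall>v2\<in>Q.
        (1 - \<epsilon>) * (norm (v1 - v2))\<^sup>2 \<le> (norm (f v1 - f v2))\<^sup>2 \<and>
        (norm (f v1 - f v2))\<^sup>2 \<le> (1 + \<epsilon>) * (norm (v1 - v2))\<^sup>2"
    and adj: "\<forall>x y. inner (f x) y = inner x (fstar y)"
  shows "\<forall>w1\<in>span Q. \<forall>w2\<in>span Q.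
     \<bar>inner w1 (w2 - fstar (f w2))\<bar>
       \<le> \<epsilon> * (Sup (norm ` Q))\<^sup>2 * Qnorm Q w1 * Qnorm Q w2"
proof (intro ballI)
  fix w1 w2 assume w1: "w1 \<in> span Q" and w2: "w2 \<in> span Q"
  define M where "M = Sup (norm ` Q)"
  define B where "B x y = inner x y - inner (f x) (f y)" for x y
  define K where "K = \<epsilon> * M\<^sup>2"
  have K0: "0 \<le> K" unfolding K_def using eps by simp
  have key: "inner w1 (w2 - fstar (f w2)) = B w1 w2"
    unfolding B_def using adj by (simp add: inner_diff_right)
  have fl: "f (a *\<^sub>R u + x) = a *\<^sub>R f u + f x" for a u x
    using lin by (simp add: linear_add linear_cmul)
  have addL: "B (a *\<^sub>R u + x) y = a * B u y + B x y" for a u x y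
    unfolding B_def fl by (simp add: inner_add_left algebra_simps)
  have addR: "B x (a *\<^sub>R u + y) = a * B x u + B x y" for a u x y
    unfolding B_def fl by (simp add: inner_add_right algebra_simps)
  have f0: "f 0 = 0" using lin by (simp add: linear_0)
  have z1: "B 0 y = 0" for y unfolding B_def f0 by simp
  have z2: "B x 0 = 0" for x unfolding B_def f0 by simp
  have nM: "norm u \<le> M" if "u \<in> Q" for u
    unfolding M_def using bdd that by (auto intro: cSup_upper)
  have Kb: "\<forall>u\<in>Q. \<forall>v\<in>Q. \<bar>B u v\<bar> \<le> K"
  proof (intro ballI)
    fix u v assume u: "u \<in> Q" and v: "v \<in> Q"
    have mv: "-v \<in> Q" using symm v by force
    have fm: "f (-v) = - f v" using lin by (simp add: linear_neg)
    have fd: "f (u - v) = f u - f v" using lin by (simp add: linear_diff)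
    have fs: "f (u + v) = f u + f v" using lin by (simp add: linear_add)
    from JL u v have A1: "(1 - \<epsilon>) * (norm (u - v))\<^sup>2 \<le> (norm (f u - f v))\<^sup>2"
      and A2: "(norm (f u - f v))\<^sup>2 \<le> (1 + \<epsilon>) * (norm (u - v))\<^sup>2" by auto
    from JL u mv have C: "(1 - \<epsilon>) * (norm (u - - v))\<^sup>2 \<le> (norm (f u - f (- v)))\<^sup>2 \<and>
      (norm (f u - f (- v)))\<^sup>2 \<le> (1 + \<epsilon>) * (norm (u - - v))\<^sup>2" by blast
    then have C1: "(1 - \<epsilon>) * (norm (u + v))\<^sup>2 \<le> (norm (f u + f v))\<^sup>2"
      and C2: "(norm (f u + f v))\<^sup>2 \<le> (1 + \<epsilon>) * (norm (u + v))\<^sup>2" using fm by auto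
    have e1: "(norm (u - v))\<^sup>2 = inner u u - 2 * inner u v + inner v v"
      by (simp add: power2_norm_eq_inner inner_diff_left inner_diff_right inner_commute)
    have e2: "(norm (u + v))\<^sup>2 = inner u u + 2 * inner u v + inner v v"
      by (simp add: power2_norm_eq_inner inner_add_left inner_add_right inner_commute)
    have e3: "(norm (f u - f v))\<^sup>2 = inner (f u) (f u) - 2 * inner (f u) (f v) + inner (f v) (f v)"
      by (simp add: power2_norm_eq_inner inner_diff_left inner_diff_right inner_commute)
    have e4: "(norm (f u + f v))\<^sup>2 = inner (f u) (f u) + 2 * inner (f u) (f v) + inner (f v) (f v)"
      by (simp add: power2_norm_eq_inner inner_add_left inner_add_right inner_commute)
    have uu: "inner u u \<le> M\<^sup>2"
      using nM[OF u] by (simp add: power2_norm_eq_inner[symmetric] power_mono)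
    have vv: "inner v v \<le> M\<^sup>2"
      using nM[OF v] by (simp add: power2_norm_eq_inner[symmetric] power_mono)
    have s: "(norm (u - v))\<^sup>2 + (norm (u + v))\<^sup>2 \<le> 4 * M\<^sup>2" using e1 e2 uu vv by linarith
    have s\<epsilon>: "\<epsilon> * ((norm (u - v))\<^sup>2 + (norm (u + v))\<^sup>2) \<le> \<epsilon> * (4 * M\<^sup>2)"
      using s eps by (intro mult_left_mono) auto
    have "4 * B u v = ((norm (u + v))\<^sup>2 - (norm (u - v))\<^sup>2) - ((norm (f u + f v))\<^sup>2 - (norm (f u - f v))\<^sup>2)"
      unfolding B_def e1 e2 e3 e4 by simp
    then have "\<bar>4 * B u v\<bar> \<le> \<epsilon> * ((norm (u - v))\<^sup>2 + (norm (u + v))\<^sup>2)"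
      using A1 A2 C1 C2 by (simp add: algebra_simps abs_le_iff)
    then show "\<bar>B u v\<bar> \<le> K" unfolding K_def using s\<epsilon> by simp
  qed
  have main: "\<bar>B w1 w2\<bar> \<le> K * Qnorm Q w1 * Qnorm Q w2"
  proof -
    have step1: "\<bar>B w1 w2\<bar> \<le> K * Qnorm Q w1 * sum_list (map (\<lambda>p. \<bar>fst p\<bar>) qs)"
      if qs: "set (map snd qs) \<subseteq> Q" "sum_list (map (\<lambda>p. fst p *\<^sub>R snd p) qs) = w2" for qs
    proof -
      define b where "b = sum_list (map (\<lambda>p. \<bar>fst p\<bar>) qs)"
      have b0: "0 \<le> b" unfolding b_def by (auto intro!: sum_list_nonneg)
      have all: "\<bar>B w1 w2\<bar> \<le> K * b * sum_list (map (\<lambda>p. \<bar>fst p\<bar>) ps)"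
        if ps: "set (map snd ps) \<subseteq> Q" "sum_list (map (\<lambda>p. fst p *\<^sub>R snd p) ps) = w1" for ps
        using bil_bound[of B Q K ps qs, OF addL addR z1 z2 Kb ps(1) qs(1)] ps qs
        unfolding b_def by (simp add: algebra_simps)
      show ?thesis
      proof (cases "K * b = 0")
        case True
        obtain ps where "set (map snd ps) \<subseteq> Q" "sum_list (map (\<lambda>p. fst p *\<^sub>R snd p) ps) = w1"
          using Qnorm_nonempty[OF w1] by blast
        then have "\<bar>B w1 w2\<bar> \<le> 0" using all True by simp
        moreover have "K * Qnorm Q w1 * b = 0" using True
          by (metis mult.commute mult.left_commute mult_zero_right)
        ultimately show ?thesis unfolding b_def by linarith
      next
        case False
        then have pos: "0 < K * b" using K0 b0 by simp
        have "\<bar>B w1 w2\<bar> / (K * b) \<le> Qnorm Q w1"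
          by (rule Qnorm_greatest[OF w1]) (use all pos in \<open>simp add: divide_le_eq mult.commute\<close>)
        then have "\<bar>B w1 w2\<bar> \<le> Qnorm Q w1 * (K * b)" using pos by (simp add: divide_le_eq)
        then show ?thesis unfolding b_def by (simp add: algebra_simps)
      qed
    qed
    define c where "c = K * Qnorm Q w1"
    have c0: "0 \<le> c" unfolding c_def using K0 Qnorm_nonneg[OF w1] by simp
    show ?thesis
    proof (cases "c = 0")
      case True
      obtain qs where "set (map snd qs) \<subseteq> Q" "sum_list (map (\<lambda>p. fst p *\<^sub>R snd p) qs) = w2"
        using Qnorm_nonempty[OF w2] by blast
      then have "\<bar>B w1 w2\<bar> \<le> 0" using step1 True unfolding c_def by fastforce
      moreover have "K * Qnorm Q w1 * Qnorm Q w2 = 0" using True unfolding c_def by simp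
      ultimately show ?thesis by linarith
    next
      case False
      then have pos: "0 < c" using c0 by simp
      have "\<bar>B w1 w2\<bar> / c \<le> Qnorm Q w2"
        by (rule Qnorm_greatest[OF w2]) (use step1 pos in \<open>simp add: divide_le_eq mult.commute c_def\<close>)
      then show ?thesis using pos unfolding c_def by (simp add: divide_le_eq mult.commute)
    qed
  qed
  show "\<bar>inner w1 (w2 - fstar (f w2))\<bar> \<le> \<epsilon> * (Sup (norm ` Q))\<^sup>2 * Qnorm Q w1 * Qnorm Q w2"
    using main key unfolding K_def M_def by simp
qed

end
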